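(* Let $\mathbf V$ be a monoid variety satisfying $xtx\approx xtx^2$. If $\mathbf V$ contains $\mathbb M_\lambda(ata^+)$ but does not contain $\mathbf K=\mathbb M_\lambda(bta^+b^+)$, then $\mathbf V$ satisfies $xty^2x\approx xty^2xyx$.
   Context: Words are elements of the free monoid $\mathfrak A^*$ over a countably infinite alphabet. Let $\tau_1$ be the congruence on $\mathfrak A^*$ generated by $a=aa$ for all letters $a$. Define $\mathbf u\,\lambda\,\mathbf v$ iff $\mathbf u\,\tau_1\,\mathbf v$, $\mathbf u,\mathbf v$ have the same set of multiple (occurring at least twice) letters, and for each multiple letter its first two occurrences are adjacent in $\mathbf u$ iff they are adjacent in $\mathbf v$. For $\lambda$-classes, $\mathtt v\le\mathtt u$ iff $\mathtt u=\mathtt p\mathtt v\mathtt s$ in $\mathfrak A^*/\lambda$. For a set $\mathtt W$ of $\lambda$-classes, $M_\lambda(\mathtt W)$ is the Rees quotient of $\mathfrak A^*/\lambda$ by the ideal of classes not $\le$ any element of $\mathtt W$, and $\mathbb M_\lambda(\mathtt W)$ is the monoid variety it generates. Here $ata^+$ denotes the $\lambda$-class $\{ata^k:k\ge1\}$ and $bta^+b^+$ denotes the $\lambda$-class $\{bta^kb^m:k\ge2,m\ge1\}$. *)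

theory Defs
  imports "HOL-Algebra.Group"
begin

type_synonym word = "nat list"

inductive tau1 :: "word \<Rightarrow> word \<Rightarrow> bool" where
  tau1_base: "tau1 [a] [a, a]"
| tau1_refl: "tau1 u u"
| tau1_sym: "tau1 u v \<Longrightarrow> tau1 v u"
| tau1_trans: "tau1 u v \<Longrightarrow> tau1 v w \<Longrightarrow> tau1 u w"
| tau1_ctx: "tau1 u v \<Longrightarrow> tau1 (p @ u @ s) (p @ v @ s)"

definition mult_letters :: "word \<Rightarrow> nat set" where
  "mult_letters u = {x. count_list u x \<ge> 2}"

definition first_two_adj :: "nat \<Rightarrow> word \<Rightarrow> bool" where
  "first_two_adj x u \<longleftrightarrow> (\<exists>p s. u = p @ [x, x] @ s \<and> x \<notin> set p)"

definition lam :: "word \<Rightarrow> word \<Rightarrow> bool" where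
  "lam u v \<longleftrightarrow> tau1 u v \<and> mult_letters u = mult_letters v
     \<and> (\<forall>x \<in> mult_letters u. first_two_adj x u \<longleftrightarrow> first_two_adj x v)"

definition lam_class :: "word \<Rightarrow> word set" where
  "lam_class u = {v. lam u v}"

definition lam_mult :: "word set \<Rightarrow> word set \<Rightarrow> word set" where
  "lam_mult X Y = lam_class ((SOME u. u \<in> X) @ (SOME v. v \<in> Y))"

definition lam_le :: "word set \<Rightarrow> word set \<Rightarrow> bool" where
  "lam_le V U \<longleftrightarrow> (\<exists>p s v. v \<in> V \<and> U = lam_class (p @ v @ s))"

text \<open>Rees quotient M_lambda(W): the nonzero elements are the lambda-classes below
  some element of W (as Some X), the zero is None.\<close>
definition below_W :: "word set set \<Rightarrow> word set \<Rightarrow> bool" where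
  "below_W W X \<longleftrightarrow> (\<exists>U \<in> W. lam_le X U)"

definition M_lam :: "word set set \<Rightarrow> word set option monoid" where
  "M_lam W = \<lparr> carrier = {None} \<union> Some ` {X. (\<exists>u. X = lam_class u) \<and> below_W W X},
      mult = (\<lambda>a b. case (a, b) of
                 (Some X, Some Y) \<Rightarrow>
                    (if below_W W (lam_mult X Y) then Some (lam_mult X Y) else None)
               | _ \<Rightarrow> None),
      one = Some (lam_class []) \<rparr>"

definition eval_word :: "('a, 'b) monoid_scheme \<Rightarrow> (nat \<Rightarrow> 'a) \<Rightarrow> word \<Rightarrow> 'a" where
  "eval_word M \<phi> w = foldr (\<lambda>a r. \<phi> a \<otimes>\<^bsub>M\<^esub> r) w \<one>\<^bsub>M\<^esub>"

definition sat_id :: "('a, 'b) monoid_scheme \<Rightarrow> word \<times> word \<Rightarrow> bool" where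
  "sat_id M e \<longleftrightarrow> (\<forall>\<phi>. (\<forall>a. \<phi> a \<in> carrier M) \<longrightarrow>
       eval_word M \<phi> (fst e) = eval_word M \<phi> (snd e))"

text \<open>A monoid variety is represented by its equational theory (Birkhoff):
  a fully invariant congruence on the free monoid of words.
  V satisfies u \<approx> v iff (u,v) \<in> E; V contains M iff M satisfies every identity in E.\<close>
definition subst_word :: "(nat \<Rightarrow> word) \<Rightarrow> word \<Rightarrow> word" where
  "subst_word \<sigma> w = concat (map \<sigma> w)"

definition equational_theory :: "(word \<times> word) set \<Rightarrow> bool" where
  "equational_theory E \<longleftrightarrow>
     (\<forall>u. (u, u) \<in> E) \<and>
     (\<forall>u v. (u, v) \<in> E \<longrightarrow> (v, u) \<in> E) \<and>
     (\<forall>u v w. (u, v) \<in> E \<longrightarrow> (v, w) \<in> E \<longrightarrow> (u, w) \<in> E) \<and>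
     (\<forall>u v p s. (u, v) \<in> E \<longrightarrow> (p @ u @ s, p @ v @ s) \<in> E) \<and>
     (\<forall>u v \<sigma>. (u, v) \<in> E \<longrightarrow> (subst_word \<sigma> u, subst_word \<sigma> v) \<in> E)"

definition variety_contains :: "(word \<times> word) set \<Rightarrow> ('a, 'b) monoid_scheme \<Rightarrow> bool" where
  "variety_contains E M \<longleftrightarrow> (\<forall>e \<in> E. sat_id M e)"

text \<open>Letters: a = 0, t = 1, b = 2 (and x = 0, t = 1, y = 2 in identities).\<close>
definition ata_plus :: "word set" where
  "ata_plus = {[0, 1, 0] @ replicate k 0 | k. True}"

definition btab_plus :: "word set" where
  "btab_plus = {[2, 1] @ replicate k 0 @ replicate m 2 | k m. k \<ge> 2 \<and> m \<ge> 1}"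

end

theory Submission
  imports Defs
begin
fun ft :: "nat \<Rightarrow> word \<Rightarrow> bool" where
  "ft x [] = False"
| "ft x (y # z) = (if y = x then (z \<noteq> [] \<and> hd z = x) else ft x z)"

lemma fta_Nil: "\<not> first_two_adj x []"
  unfolding first_two_adj_def by auto

lemma fta_Cons: "first_two_adj x (y # z) = (if y = x then (z \<noteq> [] \<and> hd z = x) else first_two_adj x z)"
proof (cases "y = x")
  case True
  show ?thesis
  proof
    assume "first_two_adj x (y # z)"
    then obtain p s where ps: "y # z = p @ [x, x] @ s" "x \<notin> set p" unfolding first_two_adj_def by blast
    then have "p = []" using True by (cases p) auto
    then show "if y = x then z \<noteq> [] \<and> hd z = x else first_two_adj x z" using ps True by auto
  next
    assume "if y = x then z \<noteq> [] \<and> hd z = x else first_two_adj x z"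
    then have "z \<noteq> [] \<and> hd z = x" using True by simp
    then have "y # z = [] @ [x,x] @ tl z" using True by (cases z) auto
    then show "first_two_adj x (y # z)" unfolding first_two_adj_def by (metis empty_iff list.set(1))
  qed
next
  case False
  show ?thesis
  proof
    assume "first_two_adj x (y # z)"
    then obtain p s where ps: "y # z = p @ [x, x] @ s" "x \<notin> set p" unfolding first_two_adj_def by blast
    then obtain p' where "p = y # p'" using False by (cases p) auto
    then have "z = p' @ [x,x] @ s" "x \<notin> set p'" using ps by auto
    then show "if y = x then z \<noteq> [] \<and> hd z = x else first_two_adj x z" using False
      unfolding first_two_adj_def by auto
  next
    assume "if y = x then z \<noteq> [] \<and> hd z = x else first_two_adj x z"
    then obtain p s where ps: "z = p @ [x, x] @ s" "x \<notin> set p" using False unfolding first_two_adj_def by auto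
    then have "y # z = (y # p) @ [x,x] @ s" "x \<notin> set (y # p)" using False by auto
    then show "first_two_adj x (y # z)" unfolding first_two_adj_def by blast
  qed
qed

lemma fta_ft: "first_two_adj x w = ft x w"
  by (induction w) (simp_all add: fta_Nil fta_Cons)

lemma ft_append: "ft x (u @ v) = (ft x u \<or> (x \<notin> set u \<and> ft x v)
   \<or> (count_list u x = 1 \<and> last u = x \<and> v \<noteq> [] \<and> hd v = x))"
proof (induction u)
  case Nil
  then show ?case by simp
next
  case (Cons y u)
  show ?case
  proof (cases "y = x")
    case True
    then show ?thesis
      by (cases u) (auto simp: count_list_0_iff)
  next
    case False
    then show ?thesis using Cons by (cases u) auto
  qed
qed

lemma ft_count: "ft x w \<Longrightarrow> 2 \<le> count_list w x"
  by (induction w) (auto split: if_splits simp: neq_Nil_conv)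

lemma count_list_replicate: "count_list (replicate n a) x = (if a = x then n else 0)"
  by (induction n) auto

lemma rda_left: "remdups_adj (remdups_adj xs @ ys) = remdups_adj (xs @ ys)"
proof (induction xs rule: remdups_adj.induct)
  case (3 x y xs)
  then show ?case
  proof (cases "x = y")
    case False
    obtain r where r: "remdups_adj (y # xs) = y # r"
      by (metis remdups_adj_Cons_alt)
    have "remdups_adj (x # remdups_adj (y # xs) @ ys) = x # remdups_adj (remdups_adj (y # xs) @ ys)"
      using False r by simp
    then show ?thesis using False 3 by simp
  qed simp
qed (auto simp: remdups_adj_Cons)

lemma rda_right: "remdups_adj (xs @ remdups_adj ys) = remdups_adj (xs @ ys)"
proof -
  have "remdups_adj (xs @ remdups_adj ys) = rev (remdups_adj (rev (xs @ remdups_adj ys)))"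
    by (metis remdups_adj_rev rev_rev_ident)
  also have "\<dots> = rev (remdups_adj (remdups_adj (rev ys) @ rev xs))" by simp
  also have "\<dots> = rev (remdups_adj (rev ys @ rev xs))" by (simp only: rda_left)
  also have "\<dots> = remdups_adj (xs @ ys)" by (metis remdups_adj_rev rev_append rev_rev_ident)
  finally show ?thesis .
qed

lemma tau1_remdups: "tau1 u v \<Longrightarrow> remdups_adj u = remdups_adj v"
proof (induction rule: tau1.induct)
  case (tau1_ctx u v p s)
  have "remdups_adj (p @ u @ s) = remdups_adj (p @ remdups_adj (remdups_adj u @ s))"
    by (simp add: rda_left rda_right)
  also have "\<dots> = remdups_adj (p @ v @ s)" using tau1_ctx by (simp add: rda_left rda_right)
  finally show ?case .
qed auto


lemma lam_iff: "lam u v \<longleftrightarrow> tau1 u v \<and> (\<forall>x. (2 \<le> count_list u x) = (2 \<le> count_list v x))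
   \<and> (\<forall>x. ft x u = ft x v)"
  unfolding lam_def mult_letters_def fta_ft
  by (auto dest: ft_count)

lemma lam_refl[simp]: "lam u u"
  by (simp add: lam_iff tau1_refl)

lemma lam_sym: "lam u v \<Longrightarrow> lam v u"
  by (simp add: lam_iff tau1_sym)

lemma lam_trans: "lam u v \<Longrightarrow> lam v w \<Longrightarrow> lam u w"
  unfolding lam_iff by (meson tau1_trans)

lemma tau1_set: "tau1 u v \<Longrightarrow> set u = set v"
  by (metis remdups_adj_set tau1_remdups)

lemma tau1_hd: "tau1 u v \<Longrightarrow> hd u = hd v"
  by (metis hd_remdups_adj tau1_remdups)

lemma tau1_last: "tau1 u v \<Longrightarrow> last u = last v"
  by (metis last_remdups_adj tau1_remdups)

lemma tau1_Nil: "tau1 u v \<Longrightarrow> (u = []) = (v = [])"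
  by (metis remdups_adj_Nil_iff tau1_remdups)

lemma lam_append: "lam u v \<Longrightarrow> lam (p @ u @ s) (p @ v @ s)"
proof -
  assume l: "lam u v"
  then have t: "tau1 u v" and c: "\<And>x. (2 \<le> count_list u x) = (2 \<le> count_list v x)"
    and f: "\<And>x. ft x u = ft x v" unfolding lam_iff by auto
  have st: "set u = set v" using tau1_set[OF t] .
  have c0: "(count_list u x = 0) = (count_list v x = 0)" for x
    using st by (simp add: count_list_0_iff)
  have c1: "(count_list u x = 1) = (count_list v x = 1)" for x
    using c0[of x] c[of x] by linarith
  have cc: "(2 \<le> count_list (p @ u @ s) x) = (2 \<le> count_list (p @ v @ s) x)" for x
    using c0[of x] c[of x] c1[of x] by auto
  have hd: "hd u = hd v" using tau1_hd[OF t] .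
  have la: "last u = last v" using tau1_last[OF t] .
  have nl: "(u = []) = (v = [])" using tau1_Nil[OF t] .
  have fs: "ft x (u @ s) = ft x (v @ s)" for x
    unfolding ft_append using st f c1 la by auto
  have hd2: "hd (u @ s) = hd (v @ s)" using hd nl by (cases "u = []") auto
  have nl2: "(u @ s = []) = (v @ s = [])" using nl by auto
  have "ft x (p @ (u @ s)) = ft x (p @ (v @ s))" for x
    unfolding ft_append[of x p] using fs hd2 nl2 by metis
  then show ?thesis unfolding lam_iff using cc tau1_ctx[OF t] by simp
qed

lemma lam_append2: "lam u v \<Longrightarrow> lam u' v' \<Longrightarrow> lam (u @ u') (v @ v')"
  by (metis lam_append lam_trans append_Nil append_Nil2)

lemma lam_class_eq: "lam u v \<Longrightarrow> lam_class u = lam_class v"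
  unfolding lam_class_def using lam_sym lam_trans by blast

lemma lam_class_iff: "lam_class u = lam_class v \<longleftrightarrow> lam u v"
  using lam_class_eq unfolding lam_class_def by auto

lemma in_lam_class[simp]: "v \<in> lam_class u \<longleftrightarrow> lam u v"
  unfolding lam_class_def by simp

lemma subst_Nil[simp]: "subst_word \<rho> [] = []" by (simp add: subst_word_def)
lemma subst_Cons[simp]: "subst_word \<rho> (a # w) = \<rho> a @ subst_word \<rho> w" by (simp add: subst_word_def)
lemma subst_append[simp]: "subst_word \<rho> (u @ w) = subst_word \<rho> u @ subst_word \<rho> w" by (simp add: subst_word_def)
lemma subst_replicate[simp]: "subst_word \<rho> (replicate n a) = concat (replicate n (\<rho> a))"
  by (induction n) auto
lemma concat_replicate_single[simp]: "concat (replicate n [a]) = replicate n a"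
  by (induction n) auto
lemma subst_cong: "(\<And>z. z \<in> set w \<Longrightarrow> \<rho> z = \<rho>' z) \<Longrightarrow> subst_word \<rho> w = subst_word \<rho>' w"
  by (induction w) auto

lemma eval_Nil[simp]: "eval_word M \<phi> [] = \<one>\<^bsub>M\<^esub>" by (simp add: eval_word_def)
lemma eval_Cons[simp]: "eval_word M \<phi> (a # w) = \<phi> a \<otimes>\<^bsub>M\<^esub> eval_word M \<phi> w"
  by (simp add: eval_word_def)

lemma lam_mult_class: "lam_mult (lam_class a) (lam_class b) = lam_class (a @ b)"
proof -
  have "\<exists>u. u \<in> lam_class a" using lam_refl in_lam_class by blast
  then have ua: "lam a (SOME u. u \<in> lam_class a)" using someI_ex[of "\<lambda>u. u \<in> lam_class a"] by simp
  have "\<exists>u. u \<in> lam_class b" using lam_refl in_lam_class by blast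
  then have ub: "lam b (SOME u. u \<in> lam_class b)" using someI_ex[of "\<lambda>u. u \<in> lam_class b"] by simp
  show ?thesis unfolding lam_mult_def
    using lam_class_eq[OF lam_append2[OF ua ub]] by simp
qed

lemma below_down: "below_W W (lam_class (p @ z @ s)) \<Longrightarrow> below_W W (lam_class z)"
proof -
  assume "below_W W (lam_class (p @ z @ s))"
  then obtain U p' s' v where U: "U \<in> W" "v \<in> lam_class (p @ z @ s)" "U = lam_class (p' @ v @ s')"
    unfolding below_W_def lam_le_def by blast
  have "lam (p' @ v @ s') ((p' @ p) @ z @ (s @ s'))"
    using lam_append[OF lam_sym[of "p @ z @ s" v], of p' s'] U(2) by simp
  then have "U = lam_class ((p' @ p) @ z @ (s @ s'))" using U(3) lam_class_eq by simp
  then show ?thesis unfolding below_W_def lam_le_def using U(1) lam_refl in_lam_class by blast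
qed

lemma below_char: "C = lam_class c0 \<Longrightarrow> below_W {C} (lam_class z) \<longleftrightarrow> (\<exists>p s. p @ z @ s \<in> C)"
proof
  assume C: "C = lam_class c0" and "below_W {C} (lam_class z)"
  then obtain p s v where v: "lam z v" "C = lam_class (p @ v @ s)"
    unfolding below_W_def lam_le_def by auto
  have "lam (p @ v @ s) (p @ z @ s)" using lam_append[OF lam_sym[OF v(1)]] .
  then show "\<exists>p s. p @ z @ s \<in> C" using v(2) by auto
next
  assume C: "C = lam_class c0" and "\<exists>p s. p @ z @ s \<in> C"
  then obtain p s where "lam c0 (p @ z @ s)" by auto
  then have "C = lam_class (p @ z @ s)" using C lam_class_eq by simp
  then show "below_W {C} (lam_class z)" unfolding below_W_def lam_le_def
    using lam_refl in_lam_class by blast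
qed

lemma mult_M: "mult (M_lam W) a b = (case (a, b) of
                 (Some X, Some Y) \<Rightarrow>
                    (if below_W W (lam_mult X Y) then Some (lam_mult X Y) else None)
               | _ \<Rightarrow> None)"
  by (simp add: M_lam_def)

lemma one_M: "one (M_lam W) = Some (lam_class [])" by (simp add: M_lam_def)

lemma carrier_M: "carrier (M_lam W) = {None} \<union> Some ` {X. (\<exists>u. X = lam_class u) \<and> below_W W X}"
  by (simp add: M_lam_def)

lemma eval_M:
  assumes hb: "below_W W (lam_class [])"
    and h\<rho>: "\<And>z. \<phi> z = None \<or> \<phi> z = Some (lam_class (\<rho> z))"
  shows "eval_word (M_lam W) \<phi> w = (if (\<forall>z\<in>set w. \<phi> z \<noteq> None) \<and> below_W W (lam_class (subst_word \<rho> w))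
      then Some (lam_class (subst_word \<rho> w)) else None)"
proof (induction w)
  case Nil
  then show ?case using hb by (simp add: one_M)
next
  case (Cons a w)
  show ?case
  proof (cases "\<phi> a = None")
    case True
    then show ?thesis by (simp add: mult_M)
  next
    case False
    then have pa: "\<phi> a = Some (lam_class (\<rho> a))" using h\<rho> by metis
    show ?thesis
    proof (cases "(\<forall>z\<in>set w. \<phi> z \<noteq> None) \<and> below_W W (lam_class (subst_word \<rho> w))")
      case True
      then show ?thesis using Cons pa by (simp add: mult_M lam_mult_class)
    next
      case nb: False
      then have "eval_word (M_lam W) \<phi> w = None" using Cons by simp
      moreover have "\<not> ((\<forall>z\<in>set (a # w). \<phi> z \<noteq> None) \<and> below_W W (lam_class (subst_word \<rho> (a # w))))"
        using nb below_down[of W "\<rho> a" "subst_word \<rho> w" "[]"] by auto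
      ultimately show ?thesis using pa by (simp add: mult_M)
    qed
  qed
qed

lemma E_refl: "equational_theory E \<Longrightarrow> (u, u) \<in> E" unfolding equational_theory_def by blast
lemma E_sym: "equational_theory E \<Longrightarrow> (u, v) \<in> E \<Longrightarrow> (v, u) \<in> E" unfolding equational_theory_def by blast
lemma E_trans: "equational_theory E \<Longrightarrow> (u, v) \<in> E \<Longrightarrow> (v, w) \<in> E \<Longrightarrow> (u, w) \<in> E"
  unfolding equational_theory_def by blast
lemma E_ctx: "equational_theory E \<Longrightarrow> (u, v) \<in> E \<Longrightarrow> (p @ u @ s, p @ v @ s) \<in> E"
  unfolding equational_theory_def by blast
lemma E_ctxr: "equational_theory E \<Longrightarrow> (u, v) \<in> E \<Longrightarrow> (u @ s, v @ s) \<in> E"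
  using E_ctx[of E u v "[]" s] by simp
lemma E_subst: "equational_theory E \<Longrightarrow> (u, v) \<in> E \<Longrightarrow> (subst_word \<sigma> u, subst_word \<sigma> v) \<in> E"
  unfolding equational_theory_def by blast

locale xtx =
  fixes E :: "(word \<times> word) set"
  assumes eqt: "equational_theory E"
    and xtx: "([0, 1, 0], [0, 1, 0, 0]) \<in> E"
begin

lemma blk: "(p1 @ w @ p2 @ w @ q, p1 @ w @ p2 @ w @ w @ q) \<in> E"
proof -
  define \<sigma> where "\<sigma> = (\<lambda>z::nat. if z = 0 then w else p2)"
  have "(subst_word \<sigma> [0,1,0], subst_word \<sigma> [0,1,0,0]) \<in> E" using E_subst[OF eqt xtx] .
  then have "(w @ p2 @ w, w @ p2 @ w @ w) \<in> E" by (simp add: \<sigma>_def)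
  from E_ctx[OF eqt this, of p1 q] show ?thesis by simp
qed

lemma dbl: "x \<in> set p \<Longrightarrow> (p @ [x] @ q, p @ [x, x] @ q) \<in> E"
proof -
  assume "x \<in> set p"
  then obtain p1 p2 where "p = p1 @ x # p2" by (meson split_list)
  then show ?thesis using blk[of p1 "[x]" p2 q] by simp
qed

lemma rep: "x \<in> set p \<Longrightarrow> (p @ [x] @ replicate j x @ q, p @ [x] @ q) \<in> E"
proof (induction j)
  case 0
  then show ?case by (simp add: E_refl[OF eqt])
next
  case (Suc j)
  have "(p @ [x] @ (replicate j x @ q), p @ [x, x] @ (replicate j x @ q)) \<in> E" using dbl[OF Suc.prems] .
  then have "(p @ [x] @ replicate (Suc j) x @ q, p @ [x] @ replicate j x @ q) \<in> E"
    using E_sym[OF eqt] by simp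
  then show ?case using Suc E_trans[OF eqt] by blast
qed

definition alt :: "nat \<Rightarrow> word" where "alt n = concat (replicate n [0, 2])"

lemma alt_Suc1: "alt (Suc n) = alt n @ [0, 2]"
  unfolding alt_def by (induction n) auto
lemma alt_Suc2: "alt (Suc n) = [0, 2] @ alt n"
  unfolding alt_def by simp
lemma alt_add: "alt (a + b) = alt a @ alt b"
  unfolding alt_def by (simp add: replicate_add)

definition S :: "nat \<Rightarrow> bool \<Rightarrow> word" where
  "S n e = [2, 1, 0] @ alt n @ (if e then [0] else [])"

definition R :: "nat \<Rightarrow> bool \<Rightarrow> nat \<Rightarrow> bool \<Rightarrow> bool" where
  "R n e n' e' \<longleftrightarrow> n < n' \<or> (n = n' \<and> (e \<longrightarrow> e'))"

lemma step:
  assumes "e \<or> 1 \<le> n" "c = 0 \<or> c = 2"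
  shows "\<exists>n' e'. (S n e @ [c], S n' e') \<in> E \<and> (e' \<or> 1 \<le> n') \<and> R n e n' e'
     \<and> (c = 0 \<longrightarrow> e') \<and> (c = 2 \<longrightarrow> \<not> e')"
proof (cases "c = 0")
  case True
  show ?thesis
  proof (cases e)
    case True
    have "(([2, 1, 0] @ alt n) @ [0] @ [], ([2, 1, 0] @ alt n) @ [0,0] @ []) \<in> E"
      using dbl[of 0 "[2, 1, 0] @ alt n" "[]"] by simp
    from E_sym[OF eqt this] have "(S n e @ [c], S n e) \<in> E" using True \<open>c = 0\<close> by (simp add: S_def)
    then show ?thesis using True \<open>c = 0\<close> assms by (auto simp: R_def)
  next
    case False
    then have "S n e @ [c] = S n True" using \<open>c = 0\<close> by (simp add: S_def)
    then show ?thesis using E_refl[OF eqt] False \<open>c = 0\<close> by (auto simp: R_def)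
  qed
next
  case False
  then have c2: "c = 2" using assms by simp
  show ?thesis
  proof (cases e)
    case True
    then have "S n e @ [c] = S (Suc n) False" using c2 by (simp add: S_def alt_Suc1)
    then show ?thesis using E_refl[OF eqt] True c2 by (auto simp: R_def)
  next
    case False
    then obtain m where m: "n = Suc m" using assms by (cases n) auto
    define p where "p = [2, 1, 0] @ alt m @ [0]"
    have "S n e = p @ [2]" using False m by (simp add: S_def p_def alt_Suc1)
    moreover have "(p @ [2] @ [], p @ [2, 2] @ []) \<in> E" using dbl[of 2 p "[]"] by (simp add: p_def)
    ultimately have "(S n e @ [c], S n e) \<in> E" using c2 E_sym[OF eqt] by simp
    then show ?thesis using False c2 assms by (auto simp: R_def)
  qed
qed

lemma multi:
  "set v \<subseteq> {0, 2} \<Longrightarrow> e \<or> 1 \<le> n \<Longrightarrow>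
   \<exists>n' e'. (S n e @ v, S n' e') \<in> E \<and> (e' \<or> 1 \<le> n') \<and> R n e n' e'"
proof (induction v arbitrary: n e)
  case Nil
  then show ?case using E_refl[OF eqt] by (auto simp: R_def)
next
  case (Cons c v)
  obtain n1 e1 where s1: "(S n e @ [c], S n1 e1) \<in> E" "e1 \<or> 1 \<le> n1" "R n e n1 e1"
    using step[OF Cons.prems(2), of c] Cons.prems(1) by auto
  obtain n2 e2 where s2: "(S n1 e1 @ v, S n2 e2) \<in> E" "e2 \<or> 1 \<le> n2" "R n1 e1 n2 e2"
    using Cons.IH[OF _ s1(2)] Cons.prems(1) by auto
  have "(S n e @ [c] @ v, S n1 e1 @ v) \<in> E" using E_ctxr[OF eqt s1(1), of v] by simp
  then have "(S n e @ c # v, S n2 e2) \<in> E" using E_trans[OF eqt _ s2(1)] by simp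
  moreover have "R n e n2 e2" using s1(3) s2(3) unfolding R_def by auto
  ultimately show ?case using s2(2) by blast
qed

lemma block: "([2, 1, 0] @ alt (j + 2), [2, 1, 0] @ alt 2) \<in> E"
proof (induction j)
  case 0
  then show ?case using E_refl[OF eqt] by (simp add: numeral_2_eq_2)
next
  case (Suc j)
  have a1: "alt (Suc j + 2) = [0,2] @ alt j @ [0,2] @ [0,2]"
  proof -
    have "alt (Suc j + 2) = alt (1 + j + 1 + 1)" by simp
    then show ?thesis by (simp only: alt_add) (simp add: alt_def)
  qed
  have a2: "alt (j + 2) = [0,2] @ alt j @ [0,2]"
  proof -
    have "alt (j + 2) = alt (1 + j + 1)" by simp
    then show ?thesis by (simp only: alt_add) (simp add: alt_def)
  qed
  have "([2, 1, 0] @ [0,2] @ alt j @ [0,2] @ [0,2] @ [], [2, 1, 0] @ [0,2] @ alt j @ [0,2] @ []) \<in> E"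
    using E_sym[OF eqt blk[of "[2,1,0]" "[0,2]" "alt j" "[]"]] by simp
  then have "([2, 1, 0] @ alt (Suc j + 2), [2, 1, 0] @ alt (j + 2)) \<in> E" using a1 a2 by simp
  then show ?case using Suc E_trans[OF eqt] by blast
qed

lemma derivation:
  assumes L: "(([2, 1] @ replicate k 0 @ replicate m 2), 2 # 1 # u) \<in> E"
    and k: "2 \<le> k" and m: "1 \<le> m" and u: "set u \<subseteq> {0, 2}" and u20: "u = p @ [2, 0] @ q"
  shows "([2, 1, 0, 0, 2], [2, 1, 0, 0, 2, 0, 2]) \<in> E"
proof -
  define \<sigma> where "\<sigma> = (\<lambda>z::nat. if z = 1 then [1, 0, 0] else [z])"
  have su: "subst_word \<sigma> u = u"
  proof -
    have "subst_word \<sigma> u = subst_word (\<lambda>z. [z]) u" using u by (intro subst_cong) (auto simp: \<sigma>_def)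
    also have "\<dots> = u" by (induction u) auto
    finally show ?thesis .
  qed
  have "(subst_word \<sigma> ([2, 1] @ replicate k 0 @ replicate m 2), subst_word \<sigma> (2 # 1 # u)) \<in> E"
    using E_subst[OF eqt L] .
  then have e1: "([2, 1, 0, 0] @ replicate k 0 @ replicate m 2, [2, 1, 0, 0] @ u) \<in> E"
    using su by (simp add: \<sigma>_def)
  obtain m' where m': "m = Suc m'" using m by (cases m) auto
  have r1: "([2, 1, 0] @ [0] @ replicate k 0 @ replicate m 2, [2, 1, 0] @ [0] @ replicate m 2) \<in> E"
    using rep[of 0 "[2,1,0]" k "replicate m 2"] by simp
  have r2: "([2, 1, 0, 0] @ [2] @ replicate m' 2 @ [], [2, 1, 0, 0] @ [2] @ []) \<in> E"
    using rep[of 2 "[2,1,0,0]" m' "[]"] by simp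
  have r1': "([2, 1, 0, 0] @ replicate k 0 @ replicate m 2, [2, 1, 0, 0] @ [2] @ replicate m' 2 @ []) \<in> E"
    using r1 m' by simp
  have LX: "([2, 1, 0, 0] @ replicate k 0 @ replicate m 2, [2, 1, 0, 0, 2]) \<in> E"
    using E_trans[OF eqt r1' r2] by simp
  have S0: "S 0 True = [2, 1, 0, 0]" by (simp add: S_def alt_def)
  have up: "set p \<subseteq> {0, 2}" "set q \<subseteq> {0, 2}" using u u20 by auto
  obtain n1 e1 where s1: "(S 0 True @ p, S n1 e1) \<in> E" "e1 \<or> 1 \<le> n1"
    using multi[OF up(1), of True 0] by auto
  obtain n2 e2 where s2: "(S n1 e1 @ [2], S n2 e2) \<in> E" "e2 \<or> 1 \<le> n2" "\<not> e2"
    using step[OF s1(2), of 2] by auto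
  have s3: "S n2 e2 @ [0] = S n2 True" using s2(3) by (simp add: S_def)
  obtain n3 e3 where s4: "(S n2 True @ q, S n3 e3) \<in> E" "R n2 True n3 e3"
    using multi[OF up(2), of True n2] by auto
  have c1: "(S 0 True @ p @ [2] @ [0] @ q, S n1 e1 @ [2] @ [0] @ q) \<in> E"
    using E_ctxr[OF eqt s1(1), of "[2] @ [0] @ q"] by simp
  have c2: "(S n1 e1 @ [2] @ [0] @ q, S n2 e2 @ [0] @ q) \<in> E"
    using E_ctxr[OF eqt s2(1), of "[0] @ q"] by simp
  have c3: "(S n2 e2 @ [0] @ q, S n3 e3) \<in> E" using s3 s4(1) by (metis append_assoc)
  have RU: "([2, 1, 0, 0] @ u, S n3 e3) \<in> E"
    using E_trans[OF eqt c1 E_trans[OF eqt c2 c3]] S0 u20 by simp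
  have n3: "2 \<le> n3 \<or> (1 \<le> n3 \<and> e3)" using s4(2) s2(2) s2(3) unfolding R_def by auto
  have XS: "([2, 1, 0, 0, 2], S n3 e3) \<in> E"
    using E_trans[OF eqt E_sym[OF eqt LX] E_trans[OF eqt e1 RU]] .
  have X2: "([2, 1, 0, 0, 2], [2, 1, 0, 0, 2] @ [2]) \<in> E" using dbl[of 2 "[2,1,0,0]" "[]"] by simp
  have e3': "e3 \<or> 1 \<le> n3" using n3 by auto
  obtain n4 e4 where s5: "(S n3 e3 @ [2], S n4 e4) \<in> E" "R n3 e3 n4 e4" "\<not> e4"
    using step[OF e3', of 2] by auto
  have n4: "2 \<le> n4" using n3 s5(2) s5(3) unfolding R_def by auto
  have "([2, 1, 0, 0, 2], S n4 e4) \<in> E"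
    using E_trans[OF eqt X2 E_trans[OF eqt E_ctxr[OF eqt XS, of "[2]"] s5(1)]] by simp
  moreover obtain j where "n4 = j + 2" using n4 by (metis add.commute le_Suc_ex)
  ultimately have "([2, 1, 0, 0, 2], [2, 1, 0] @ alt 2) \<in> E"
    using s5(3) block[of j] E_trans[OF eqt] by (simp add: S_def)
  then show ?thesis by (simp add: alt_def numeral_2_eq_2)
qed

end

lemma concat_replicate_Nil[simp]: "concat (replicate n []) = []"
  by (induction n) auto

lemma tau1_rep: "tau1 [c] (replicate (Suc n) c)"
proof (induction n)
  case 0 then show ?case by (simp add: tau1_refl)
next
  case (Suc n)
  have "tau1 ([c] @ [c] @ []) ([c] @ replicate (Suc n) c @ [])" using tau1_ctx[OF Suc] by blast
  then have "tau1 [c, c] (replicate (Suc (Suc n)) c)" by simp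
  then show ?case using tau1_trans[OF tau1_base] by blast
qed

lemma ft_rep_neq: "x \<noteq> c \<Longrightarrow> \<not> ft x (replicate n c)"
  by (induction n) auto

lemma lam_rep:
  assumes "(n = 0) = (n' = 0)" "(2 \<le> n) = (2 \<le> n')"
  shows "lam (replicate n c) (replicate n' c)"
proof (cases "n \<le> 1")
  case True
  then have "n = n'" using assms by linarith
  then show ?thesis by simp
next
  case False
  then obtain a b where ab: "n = Suc (Suc a)" "n' = Suc (Suc b)" using assms
    by (metis One_nat_def Suc_1 Suc_le_D not_less_eq_eq)
  have t: "tau1 (replicate n c) (replicate n' c)"
    using ab tau1_trans[OF tau1_sym[OF tau1_rep] tau1_rep] by blast
  have f: "ft x (replicate n c) = ft x (replicate n' c)" for x
    using ab ft_rep_neq[of x c] by (cases "x = c") auto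
  show ?thesis unfolding lam_iff using t f ab by (simp add: count_list_replicate)
qed

lemma lam_step: "lam (c # z @ [c, c]) (c # z @ [c])"
proof -
  have t: "tau1 (c # z @ [c, c]) (c # z @ [c])"
    using tau1_sym[OF tau1_ctx[OF tau1_base, of "c # z" c "[]"]] by simp
  have f: "ft x (c # z @ [c, c]) = ft x (c # z @ [c])" for x
  proof (cases "x = c")
    case True
    then show ?thesis by (cases z) auto
  next
    case False
    then show ?thesis by (simp add: ft_append)
  qed
  show ?thesis unfolding lam_iff using t f by simp
qed

lemma rep_snoc: "replicate (Suc n) c = replicate n c @ [c]"
  by (induction n) auto

lemma lam_tail: "lam (c # q @ replicate (Suc n) c) (c # q @ [c])"
proof (induction n)
  case 0 then show ?case by simp
next
  case (Suc n)
  have e1: "c # q @ replicate (Suc (Suc n)) c = c # (q @ replicate n c) @ [c, c]"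
    using rep_snoc[of "Suc n" c] rep_snoc[of n c] by simp
  have e2: "c # (q @ replicate n c) @ [c] = c # q @ replicate (Suc n) c"
    using rep_snoc[of n c] by simp
  show ?case using lam_trans[OF lam_step[of c "q @ replicate n c"]] e1 e2 Suc by simp
qed

lemma rd_decomp:
  assumes "remdups_adj z = c # r"
  shows "\<exists>i z'. 0 < i \<and> z = replicate i c @ z' \<and> remdups_adj z' = r \<and> (z' \<noteq> [] \<longrightarrow> hd z' \<noteq> c)"
proof -
  obtain y z0 where z: "z = y # z0" using assms by (cases z) auto
  have y: "y = c" using assms z by (metis hd_remdups_adj list.sel(1))
  define t where "t = takeWhile (\<lambda>x. x = c) z0"
  define d where "d = dropWhile (\<lambda>x. x = c) z0"
  have "remdups_adj (c # z0) = c # remdups_adj (dropWhile (\<lambda>x. x = c) z0)" by (rule remdups_adj_Cons')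
  then have r: "r = remdups_adj d" using assms z y d_def by simp
  have z0: "z0 = t @ d" by (simp add: t_def d_def)
  have "\<forall>x\<in>set t. x = c" unfolding t_def by (auto dest: set_takeWhileD)
  then have "replicate (length t) c = t" by (rule replicate_length_same)
  then obtain n where n: "t = replicate n c" by metis
  have zz: "z = replicate (Suc n) c @ d" using z y z0 n by simp
  have hd: "d \<noteq> [] \<longrightarrow> hd d \<noteq> c" unfolding d_def using hd_dropWhile[of "\<lambda>x. x = c" z0] by simp
  show ?thesis using zz r hd by blast
qed

lemma lam_set: "lam a b \<Longrightarrow> set a = set b"
  unfolding lam_iff using tau1_set by blast
lemma lam_hd: "lam a b \<Longrightarrow> hd a = hd b"
  unfolding lam_iff using tau1_hd by blast
lemma lam_count: "lam a b \<Longrightarrow> (2 \<le> count_list a x) = (2 \<le> count_list b x)"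
  unfolding lam_iff by blast
lemma lam_ft: "lam a b \<Longrightarrow> ft x a = ft x b"
  unfolding lam_iff by blast
lemma lam_rd: "lam a b \<Longrightarrow> remdups_adj a = remdups_adj b"
  unfolding lam_iff using tau1_remdups by blast

lemma A_class: "ata_plus = lam_class [0, 1, 0]"
proof (intro Set.set_eqI iffI)
  fix z assume "z \<in> ata_plus"
  then obtain k where z: "z = [0, 1, 0] @ replicate k 0" unfolding ata_plus_def by auto
  have "lam (0 # [1] @ replicate (Suc k) 0) (0 # [1] @ [0])" using lam_tail .
  then show "z \<in> lam_class [0, 1, 0]" using z lam_sym by simp
next
  fix z assume "z \<in> lam_class [0, 1, 0]"
  then have l: "lam [0, 1, 0] z" by simp
  have rz: "remdups_adj z = [0, 1, 0]" using lam_rd[OF l] by simp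
  obtain i z1 where z1: "0 < i" "z = replicate i 0 @ z1" "remdups_adj z1 = [1, 0]"
    using rd_decomp[OF rz] by blast
  obtain j z2 where z2: "0 < j" "z1 = replicate j 1 @ z2" "remdups_adj z2 = [0]"
    using rd_decomp[OF z1(3)] by blast
  obtain l z3 where z3: "0 < l" "z2 = replicate l 0 @ z3" "remdups_adj z3 = []"
    using rd_decomp[OF z2(3)] by blast
  have zz: "z = replicate i 0 @ replicate j 1 @ replicate l 0" using z1 z2 z3 by simp
  have "\<not> 2 \<le> count_list z 1" using lam_count[OF l, of 1] by simp
  then have j1: "j = 1" using zz z2(1) by (simp add: count_list_replicate)
  have nf: "\<not> ft 0 z" using lam_ft[OF l, of 0] by simp
  have "i < 2"
  proof (rule ccontr)
    assume "\<not> i < 2"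
    then obtain i' where "i = Suc (Suc i')" by (metis add_2_eq_Suc le_Suc_ex not_less)
    then have "ft 0 z" using zz by simp
    then show False using nf by simp
  qed
  then have i1: "i = 1" using z1(1) by simp
  obtain l' where "l = Suc l'" using z3(1) by (cases l) auto
  then have "z = [0, 1, 0] @ replicate l' 0" using zz i1 j1 by simp
  then show "z \<in> ata_plus" unfolding ata_plus_def by blast
qed

lemma B_class: "btab_plus = lam_class [2, 1, 0, 0, 2]"
proof (intro Set.set_eqI iffI)
  fix z assume "z \<in> btab_plus"
  then obtain k m where z: "z = [2, 1] @ replicate k 0 @ replicate m 2" "2 \<le> k" "1 \<le> m"
    unfolding btab_plus_def by auto
  obtain m' where m': "m = Suc m'" using z(3) by (cases m) auto
  have l1: "lam ([2, 1] @ replicate 2 0 @ [2]) ([2, 1] @ replicate k 0 @ [2])"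
    using lam_append[OF lam_rep[of 2 k 0], of "[2,1]" "[2]"] z(2) by simp
  have l2: "lam ([2, 1] @ replicate k 0 @ replicate (Suc m') 2) ([2, 1] @ replicate k 0 @ [2])"
    using lam_tail[of 2 "1 # replicate k 0" m'] by simp
  have "lam [2, 1, 0, 0, 2] z" using lam_trans[OF l1 lam_sym[OF l2]] z m'
    by (simp add: numeral_2_eq_2)
  then show "z \<in> lam_class [2, 1, 0, 0, 2]" by simp
next
  fix z assume "z \<in> lam_class [2, 1, 0, 0, 2]"
  then have l: "lam [2, 1, 0, 0, 2] z" by simp
  have rz: "remdups_adj z = [2, 1, 0, 2]" using lam_rd[OF l] by simp
  obtain i z1 where z1: "0 < i" "z = replicate i 2 @ z1" "remdups_adj z1 = [1, 0, 2]"
    using rd_decomp[OF rz] by blast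
  obtain j z2 where z2: "0 < j" "z1 = replicate j 1 @ z2" "remdups_adj z2 = [0, 2]"
    using rd_decomp[OF z1(3)] by blast
  obtain k z3 where z3: "0 < k" "z2 = replicate k 0 @ z3" "remdups_adj z3 = [2]"
    using rd_decomp[OF z2(3)] by blast
  obtain m z4 where z4: "0 < m" "z3 = replicate m 2 @ z4" "remdups_adj z4 = []"
    using rd_decomp[OF z3(3)] by blast
  have zz: "z = replicate i 2 @ replicate j 1 @ replicate k 0 @ replicate m 2" using z1 z2 z3 z4 by simp
  have "\<not> 2 \<le> count_list z 1" using lam_count[OF l, of 1] by simp
  then have j1: "j = 1" using zz z2(1) by (simp add: count_list_replicate)
  have "2 \<le> count_list z 0" using lam_count[OF l, of 0] by simp
  then have k2: "2 \<le> k" using zz by (simp add: count_list_replicate)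
  have nf: "\<not> ft 2 z" using lam_ft[OF l, of 2] by simp
  have "i < 2"
  proof (rule ccontr)
    assume "\<not> i < 2"
    then obtain i' where "i = Suc (Suc i')" by (metis add_2_eq_Suc le_Suc_ex not_less)
    then have "ft 2 z" using zz by simp
    then show False using nf by simp
  qed
  then have i1: "i = 1" using z1(1) by simp
  have zf: "z = [2, 1] @ replicate k 0 @ replicate m 2" using zz i1 j1 by simp
  have "\<exists>k' m'. z = [2, 1] @ replicate k' 0 @ replicate m' 2 \<and> 2 \<le> k' \<and> 1 \<le> m'"
    using zf k2 z4(1) by (intro exI[of _ k] exI[of _ m]) simp
  then show "z \<in> btab_plus" unfolding btab_plus_def by simp
qed

definition shaped :: "word \<Rightarrow> bool" where
  "shaped x \<longleftrightarrow> (\<exists>e1 e2 e3 e4. x = replicate e1 2 @ replicate e2 1 @ replicate e3 0 @ replicate e4 2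
     \<and> e1 \<le> 1 \<and> e2 \<le> 1 \<and> (e1 = 1 \<and> e2 = 0 \<longrightarrow> e3 = 0 \<and> e4 = 0))"

lemma sort02: "sorted x \<Longrightarrow> set x \<subseteq> {0, 2} \<Longrightarrow> \<exists>a b. x = replicate a 0 @ replicate b (2::nat)"
proof (induction x)
  case Nil
  then show ?case by (intro exI[of _ 0]) simp
next
  case (Cons y x)
  then have sx: "sorted x" "set x \<subseteq> {0, 2}" "\<forall>z\<in>set x. y \<le> z" by auto
  show ?case
  proof (cases "y = 0")
    case True
    obtain a b where "x = replicate a 0 @ replicate b 2" using Cons.IH sx by blast
    then have "y # x = replicate (Suc a) 0 @ replicate b 2" using True by simp
    then show ?thesis by blast
  next
    case False
    then have y2: "y = 2" using Cons.prems by auto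
    have "\<forall>z\<in>set x. z = 2" using sx y2 by fastforce
    then have "replicate (length x) 2 = x" by (rule replicate_length_same)
    then have "y # x = replicate 0 0 @ replicate (Suc (length x)) 2" using y2 by simp
    then show ?thesis by blast
  qed
qed

lemma unsorted02: "set u \<subseteq> {0, 2::nat} \<Longrightarrow> \<not> sorted u \<Longrightarrow> \<exists>p q. u = p @ [2, 0] @ q"
proof (induction u)
  case Nil
  then show ?case by simp
next
  case (Cons y u)
  show ?case
  proof (cases "sorted u")
    case False
    then obtain p q where "u = p @ [2, 0] @ q" using Cons by auto
    then have "y # u = (y # p) @ [2, 0] @ q" by simp
    then show ?thesis by blast
  next
    case True
    then obtain z where z: "z \<in> set u" "z < y" using Cons.prems by auto
    then have yz: "y = 2" "z = 0" using Cons.prems by auto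
    obtain a b where ab: "u = replicate a 0 @ replicate b 2" using sort02[OF True] Cons.prems by auto
    then have "a \<noteq> 0" using z yz by auto
    then obtain a' where "a = Suc a'" by (cases a) auto
    then have "y # u = [] @ [2, 0] @ (replicate a' 0 @ replicate b 2)" using ab yz by simp
    then show ?thesis by blast
  qed
qed

lemma sorted_T: "sorted (replicate k 0 @ replicate m (2::nat))"
  by (auto simp: sorted_append)

lemma factor_T: "p @ x @ s = replicate k 0 @ replicate m (2::nat) \<Longrightarrow> \<exists>a b. x = replicate a 0 @ replicate b 2"
proof -
  assume h: "p @ x @ s = replicate k 0 @ replicate m (2::nat)"
  have "sorted (p @ x @ s)" using h sorted_T by simp
  then have "sorted x" by (simp add: sorted_append)
  moreover have "set x \<subseteq> {0, 2}"
  proof -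
    have "set x \<subseteq> set (p @ x @ s)" by auto
    also have "\<dots> = set (replicate k 0 @ replicate m (2::nat))" using h by simp
    also have "\<dots> \<subseteq> {0, 2}" by auto
    finally show ?thesis .
  qed
  ultimately show ?thesis using sort02 by blast
qed

lemma factor_shaped:
  assumes "p @ x @ s \<in> btab_plus"
  shows "shaped x"
proof -
  obtain k m where km: "p @ x @ s = 2 # 1 # (replicate k 0 @ replicate m 2)"
    using assms unfolding btab_plus_def by auto
  have w0: "shaped []" unfolding shaped_def by (intro exI[of _ 0]) simp
  have w1: "shaped [2]" unfolding shaped_def by (rule exI[of _ 1], rule exI[of _ 0], rule exI[of _ 0], rule exI[of _ 0]) simp
  have w2: "shaped (2 # 1 # replicate a 0 @ replicate b 2)" for a b
    unfolding shaped_def by (rule exI[of _ 1], rule exI[of _ 1], rule exI[of _ a], rule exI[of _ b]) simp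
  have w3: "shaped (1 # replicate a 0 @ replicate b 2)" for a b
    unfolding shaped_def by (rule exI[of _ 0], rule exI[of _ 1], rule exI[of _ a], rule exI[of _ b]) simp
  have w4: "shaped (replicate a 0 @ replicate b 2)" for a b
    unfolding shaped_def by (rule exI[of _ 0], rule exI[of _ 0], rule exI[of _ a], rule exI[of _ b]) simp
  have pre: "x' @ s = replicate k 0 @ replicate m 2 \<Longrightarrow> \<exists>a b. x' = replicate a 0 @ replicate b 2" for x'
    using factor_T[of "[]" x' s k m] by simp
  show ?thesis
  proof (cases p)
    case Nil
    then have xs: "x @ s = 2 # 1 # (replicate k 0 @ replicate m 2)" using km by simp
    show ?thesis
    proof (cases x)
      case Nil then show ?thesis using w0 by simp
    next
      case (Cons c x')
      then have c: "c = 2" and x's: "x' @ s = 1 # (replicate k 0 @ replicate m 2)" using xs by auto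
      show ?thesis
      proof (cases x')
        case Nil then show ?thesis using Cons c w1 by simp
      next
        case (Cons d x'')
        then have "x'' @ s = replicate k 0 @ replicate m 2" using x's by auto
        then obtain a b where "x'' = replicate a 0 @ replicate b 2" using pre by blast
        then show ?thesis using \<open>x = c # x'\<close> c Cons x's w2 by auto
      qed
    qed
  next
    case (Cons c p')
    then have p's: "p' @ x @ s = 1 # (replicate k 0 @ replicate m 2)" using km by auto
    show ?thesis
    proof (cases p')
      case Nil
      then have xs: "x @ s = 1 # (replicate k 0 @ replicate m 2)" using p's by simp
      show ?thesis
      proof (cases x)
        case Nil then show ?thesis using w0 by simp
      next
        case (Cons d x'')
        then have "x'' @ s = replicate k 0 @ replicate m 2" "d = 1" using xs by auto
        then obtain a b where "x'' = replicate a 0 @ replicate b 2" using pre by blast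
        then show ?thesis using Cons \<open>d = 1\<close> w3 by auto
      qed
    next
      case (Cons d p'')
      then have "p'' @ x @ s = replicate k 0 @ replicate m 2" using p's by auto
      then obtain a b where "x = replicate a 0 @ replicate b 2" using factor_T by blast
      then show ?thesis using w4 by simp
    qed
  qed
qed

definition r1 :: "nat \<Rightarrow> word" where "r1 z = (if z = 0 then [0] else if z = 1 then [1] else [])"
definition r2 :: "nat \<Rightarrow> word" where "r2 z = (if z = 2 then [0] else if z = 1 then [1] else [])"

lemma r1_shape: "subst_word r1 (replicate e1 2 @ replicate e2 1 @ replicate e3 0 @ replicate e4 2)
   = replicate e2 1 @ replicate e3 0"
  by (simp add: r1_def)
lemma r2_shape: "subst_word r2 (replicate e1 2 @ replicate e2 1 @ replicate e3 0 @ replicate e4 2)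
   = replicate e1 0 @ replicate e2 1 @ replicate e4 0"
  by (simp add: r2_def)

lemma lam_shaped:
  assumes sx: "shaped x" and sy: "shaped y"
    and l1: "lam (subst_word r1 x) (subst_word r1 y)"
    and l2: "lam (subst_word r2 x) (subst_word r2 y)"
  shows "lam x y"
proof -
  obtain e1 e2 e3 e4 where x: "x = replicate e1 2 @ replicate e2 1 @ replicate e3 0 @ replicate e4 2"
    and e: "e1 \<le> 1" "e2 \<le> 1" "e1 = 1 \<and> e2 = 0 \<longrightarrow> e3 = 0 \<and> e4 = 0"
    using sx unfolding shaped_def by blast
  obtain f1 f2 f3 f4 where y: "y = replicate f1 2 @ replicate f2 1 @ replicate f3 0 @ replicate f4 2"
    and f: "f1 \<le> 1" "f2 \<le> 1" "f1 = 1 \<and> f2 = 0 \<longrightarrow> f3 = 0 \<and> f4 = 0"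
    using sy unfolding shaped_def by blast
  have L1: "lam (replicate e2 1 @ replicate e3 0) (replicate f2 1 @ replicate f3 0)"
    using l1 x y r1_shape by simp
  have L2: "lam (replicate e1 0 @ replicate e2 1 @ replicate e4 0) (replicate f1 0 @ replicate f2 1 @ replicate f4 0)"
    using l2 x y r2_shape by simp
  have s1: "set (replicate e2 (1::nat) @ replicate e3 0) = set (replicate f2 1 @ replicate f3 0)"
    using lam_set[OF L1] .
  have "(e2 = 0) = (f2 = 0)"
  proof -
    have "(1 \<in> set (replicate e2 (1::nat) @ replicate e3 0)) = (e2 \<noteq> 0)" by auto
    moreover have "(1 \<in> set (replicate f2 (1::nat) @ replicate f3 0)) = (f2 \<noteq> 0)" by auto
    ultimately show ?thesis using s1 by (metis (no_types))
  qed
  then have e2f2: "e2 = f2" using e f by linarith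
  have e30: "(e3 = 0) = (f3 = 0)"
  proof -
    have "(0 \<in> set (replicate e2 (1::nat) @ replicate e3 0)) = (e3 \<noteq> 0)" by auto
    moreover have "(0 \<in> set (replicate f2 (1::nat) @ replicate f3 0)) = (f3 \<noteq> 0)" by auto
    ultimately show ?thesis using s1 by (metis (no_types))
  qed
  have e32: "(2 \<le> e3) = (2 \<le> f3)" using lam_count[OF L1, of 0] by (simp add: count_list_replicate)
  have R3: "lam (replicate e3 0) (replicate f3 0)" using lam_rep[OF e30 e32] .
  have s2: "set (replicate e1 (0::nat) @ replicate e2 1 @ replicate e4 0) = set (replicate f1 0 @ replicate f2 1 @ replicate f4 0)"
    using lam_set[OF L2] .
  have c2: "(2 \<le> e1 + e4) = (2 \<le> f1 + f4)" using lam_count[OF L2, of 0] by (simp add: count_list_replicate)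
  have h2: "hd (replicate e1 (0::nat) @ replicate e2 1 @ replicate e4 0) = hd (replicate f1 0 @ replicate f2 1 @ replicate f4 0)"
    using lam_hd[OF L2] .
  show ?thesis
  proof (cases "e2 = 0")
    case True
    then have f20: "f2 = 0" using e2f2 by simp
    have xe: "x = replicate e3 0 @ replicate (e1 + e4) 2"
      using x e True by (cases "e1 = 0") (auto simp: replicate_add)
    have ye: "y = replicate f3 0 @ replicate (f1 + f4) 2"
      using y f f20 by (cases "f1 = 0") (auto simp: replicate_add)
    have "(0 \<in> set (replicate e1 (0::nat) @ replicate e2 1 @ replicate e4 0)) = (e1 + e4 \<noteq> 0)" using True by auto
    moreover have "(0 \<in> set (replicate f1 (0::nat) @ replicate f2 1 @ replicate f4 0)) = (f1 + f4 \<noteq> 0)" using f20 by auto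
    ultimately have "(e1 + e4 = 0) = (f1 + f4 = 0)" using s2 by (metis (no_types))
    then have "lam (replicate (e1 + e4) 2) (replicate (f1 + f4) 2)" using lam_rep c2 by metis
    then show ?thesis using xe ye lam_append2[OF R3] by simp
  next
    case False
    then have e21: "e2 = 1" "f2 = 1" using e e2f2 by auto
    have "e1 = f1"
    proof -
      have "hd (replicate e1 (0::nat) @ replicate e2 1 @ replicate e4 0) = (if e1 = 0 then 1 else 0)"
        using e21 by (cases e1) auto
      moreover have "hd (replicate f1 (0::nat) @ replicate f2 1 @ replicate f4 0) = (if f1 = 0 then 1 else 0)"
        using e21 by (cases f1) auto
      ultimately have "(e1 = 0) = (f1 = 0)" using h2 by (metis zero_neq_one)
      then show ?thesis using e f by linarith
    qed
    show ?thesis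
    proof (cases "e1 = 0")
      case True
      then have f10: "f1 = 0" using \<open>e1 = f1\<close> by simp
      have "(0 \<in> set (replicate e1 (0::nat) @ replicate e2 1 @ replicate e4 0)) = (e4 \<noteq> 0)" using True by auto
      moreover have "(0 \<in> set (replicate f1 (0::nat) @ replicate f2 1 @ replicate f4 0)) = (f4 \<noteq> 0)" using f10 by auto
      ultimately have "(e4 = 0) = (f4 = 0)" using s2 by (metis (no_types))
      moreover have "(2 \<le> e4) = (2 \<le> f4)" using c2 True f10 by simp
      ultimately have R4: "lam (replicate e4 2) (replicate f4 2)" using lam_rep by metis
      have "lam ([1] @ replicate e3 0 @ replicate e4 2) ([1] @ replicate f3 0 @ replicate f4 2)"
        using lam_append2[OF lam_refl lam_append2[OF R3 R4]] .
      then show ?thesis using x y True f10 e21 by simp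
    next
      case False
      then have e11: "e1 = 1" "f1 = 1" using e \<open>e1 = f1\<close> by auto
      have e40: "(e4 = 0) = (f4 = 0)" using c2 e11 by auto
      show ?thesis
      proof (cases "e4 = 0")
        case True
        then have "f4 = 0" using e40 by simp
        have "lam ([2, 1] @ replicate e3 0 @ []) ([2, 1] @ replicate f3 0 @ [])"
          using lam_append[OF R3] .
        then show ?thesis using x y e11 e21 True \<open>f4 = 0\<close> by simp
      next
        case False
        then obtain e4' f4' where ef: "e4 = Suc e4'" "f4 = Suc f4'" using e40
          by (metis not0_implies_Suc)
        have a: "lam ([2, 1] @ replicate e3 0 @ replicate (Suc e4') 2) ([2, 1] @ replicate e3 0 @ [2])"
          using lam_tail[of 2 "1 # replicate e3 0" e4'] by simp
        have b: "lam ([2, 1] @ replicate f3 0 @ replicate (Suc f4') 2) ([2, 1] @ replicate f3 0 @ [2])"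
          using lam_tail[of 2 "1 # replicate f3 0" f4'] by simp
        have c: "lam ([2, 1] @ replicate e3 0 @ [2]) ([2, 1] @ replicate f3 0 @ [2])"
          using lam_append[OF R3] .
        have "lam ([2, 1] @ replicate e3 0 @ replicate (Suc e4') 2) ([2, 1] @ replicate f3 0 @ replicate (Suc f4') 2)"
          using lam_trans[OF a lam_trans[OF c lam_sym[OF b]]] .
        then show ?thesis using x y e11 e21 ef by simp
      qed
    qed
  qed
qed

lemma ata_mem: "[0, 1, 0] @ replicate k 0 \<in> ata_plus"
  unfolding ata_plus_def by blast

lemma ata_mem2: "[0, 1] @ replicate k 0 @ [0] \<in> ata_plus"
proof -
  have "[0, 1] @ replicate k 0 @ [0] = [0, 1, 0] @ replicate k (0::nat)"
    using rep_snoc[of k 0] by (simp add: replicate_append_same)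
  then show ?thesis using ata_mem by simp
qed

lemma btab_mem: "2 \<le> k \<Longrightarrow> 1 \<le> m \<Longrightarrow> [2, 1] @ replicate k 0 @ replicate m 2 \<in> btab_plus"
  unfolding btab_plus_def by blast

lemma btab_set: "z \<in> btab_plus \<Longrightarrow> set z \<subseteq> {0, 1, 2}"
  unfolding btab_plus_def by auto

lemma belowA1: "shaped x \<Longrightarrow> \<exists>p s. p @ subst_word r1 x @ s \<in> ata_plus"
proof -
  assume "shaped x"
  then obtain e1 e2 e3 e4 where x: "x = replicate e1 2 @ replicate e2 1 @ replicate e3 0 @ replicate e4 2"
    and e: "e2 \<le> 1" unfolding shaped_def by blast
  have h: "subst_word r1 x = replicate e2 1 @ replicate e3 0" using x r1_shape by simp
  show ?thesis
  proof (cases "e2 = 0")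
    case True
    then have "[0, 1] @ subst_word r1 x @ [0] \<in> ata_plus" using h ata_mem2 by simp
    then show ?thesis by blast
  next
    case False
    then have "e2 = 1" using e by simp
    then have "[0] @ subst_word r1 x @ [0] \<in> ata_plus" using h ata_mem2[of e3] by simp
    then show ?thesis by blast
  qed
qed

lemma belowA2: "shaped x \<Longrightarrow> \<exists>p s. p @ subst_word r2 x @ s \<in> ata_plus"
proof -
  assume "shaped x"
  then obtain e1 e2 e3 e4 where x: "x = replicate e1 2 @ replicate e2 1 @ replicate e3 0 @ replicate e4 2"
    and e: "e1 \<le> 1" "e2 \<le> 1" unfolding shaped_def by blast
  have h: "subst_word r2 x = replicate e1 0 @ replicate e2 1 @ replicate e4 0" using x r2_shape by simp
  show ?thesis
  proof (cases "e2 = 0")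
    case True
    then have "subst_word r2 x = replicate (e1 + e4) 0" using h by (simp add: replicate_add)
    then have "[0, 1] @ subst_word r2 x @ [0] \<in> ata_plus" using ata_mem2 by simp
    then show ?thesis by blast
  next
    case False
    then have e21: "e2 = 1" using e by simp
    show ?thesis
    proof (cases "e1 = 0")
      case True
      then have "[0] @ subst_word r2 x @ [0] \<in> ata_plus" using h e21 ata_mem2[of e4] by simp
      then show ?thesis by blast
    next
      case False
      then have "e1 = 1" using e by simp
      then have "[] @ subst_word r2 x @ [0] \<in> ata_plus" using h e21 ata_mem2[of e4] by simp
      then show ?thesis by blast
    qed
  qed
qed

lemma ata_f0: "\<exists>p s. p @ [0] @ s \<in> ata_plus"
  using ata_mem[of 0] by (metis append.left_neutral append_Cons append_Nil2)
lemma ata_f1: "\<exists>p s. p @ [1] @ s \<in> ata_plus"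
proof -
  have "[0] @ [1] @ [0] \<in> ata_plus" using ata_mem[of 0] by simp
  then show ?thesis by blast
qed
lemma ata_fN: "\<exists>p s. p @ [] @ s \<in> ata_plus"
proof -
  have "[0, 1, 0] @ [] @ [] \<in> ata_plus" using ata_mem[of 0] by simp
  then show ?thesis by blast
qed

lemma r1_below: "z \<in> {0, 1, 2} \<Longrightarrow> \<exists>p s. p @ r1 z @ s \<in> ata_plus"
  using ata_f0 ata_f1 ata_fN unfolding r1_def by auto

lemma r2_below: "z \<in> {0, 1, 2} \<Longrightarrow> \<exists>p s. p @ r2 z @ s \<in> ata_plus"
  using ata_f0 ata_f1 ata_fN unfolding r2_def by auto

lemma ata_lam:
  assumes contA: "variety_contains E (M_lam {ata_plus})"
    and xy: "(x, y) \<in> E"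
    and sx: "set x \<subseteq> {0, 1, 2}"
    and h\<rho>: "\<And>z. z \<in> {0, 1, 2} \<Longrightarrow> \<exists>p s. p @ \<rho> z @ s \<in> ata_plus"
    and bx: "\<exists>p s. p @ subst_word \<rho> x @ s \<in> ata_plus"
  shows "set y \<subseteq> {0, 1, 2} \<and> lam (subst_word \<rho> x) (subst_word \<rho> y)"
proof -
  define \<phi> where "\<phi> = (\<lambda>z::nat. if z \<in> {0, 1, 2} then Some (lam_class (\<rho> z)) else None)"
  have hb: "below_W {ata_plus} (lam_class [])"
    using below_char[OF A_class] ata_mem[of 0] by (metis append_Nil append_Nil2)
  have hp: "\<And>z. \<phi> z = None \<or> \<phi> z = Some (lam_class (\<rho> z))" unfolding \<phi>_def by auto
  have car: "\<forall>a. \<phi> a \<in> carrier (M_lam {ata_plus})"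
  proof
    fix a
    show "\<phi> a \<in> carrier (M_lam {ata_plus})"
    proof (cases "a \<in> {0, 1, 2}")
      case True
      then have b: "below_W {ata_plus} (lam_class (\<rho> a))" using below_char[OF A_class] h\<rho> by blast
      have "\<phi> a = Some (lam_class (\<rho> a))" using True \<phi>_def by simp
      then show ?thesis unfolding carrier_M using b by blast
    next
      case False
      then show ?thesis unfolding carrier_M \<phi>_def by simp
    qed
  qed
  have eq: "eval_word (M_lam {ata_plus}) \<phi> x = eval_word (M_lam {ata_plus}) \<phi> y"
    using contA xy car unfolding variety_contains_def sat_id_def by fastforce
  have ev: "eval_word (M_lam {ata_plus}) \<phi> w = (if (\<forall>z\<in>set w. \<phi> z \<noteq> None) \<and> below_W {ata_plus} (lam_class (subst_word \<rho> w))
      then Some (lam_class (subst_word \<rho> w)) else None)" for w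
    using eval_M[OF hb hp] .
  have bxx: "below_W {ata_plus} (lam_class (subst_word \<rho> x))" using below_char[OF A_class] bx by blast
  have nx: "\<forall>z\<in>set x. \<phi> z \<noteq> None" using sx unfolding \<phi>_def by auto
  have "eval_word (M_lam {ata_plus}) \<phi> x = Some (lam_class (subst_word \<rho> x))" using ev[of x] bxx nx by simp
  then have "eval_word (M_lam {ata_plus}) \<phi> y = Some (lam_class (subst_word \<rho> x))" using eq by simp
  then have c: "(\<forall>z\<in>set y. \<phi> z \<noteq> None)" and d: "lam_class (subst_word \<rho> y) = lam_class (subst_word \<rho> x)"
    using ev[of y] by (auto split: if_splits)
  have "set y \<subseteq> {0, 1, 2}" using c unfolding \<phi>_def by (auto split: if_splits)
  then show ?thesis using d lam_class_iff lam_sym by metis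
qed

lemma cnt_r: "set u \<subseteq> {0, 1, 2} \<Longrightarrow> count_list (subst_word r1 u) 1 = count_list u 1
   \<and> count_list (subst_word r1 u) 0 = count_list u 0 \<and> count_list (subst_word r2 u) 0 = count_list u 2"
  by (induction u) (auto simp: r1_def r2_def)

context xtx
begin

lemma dpart:
  assumes contA: "variety_contains E (M_lam {ata_plus})"
    and LE: "(L, w) \<in> E" and Lb: "L \<in> btab_plus" and wb: "w \<notin> btab_plus"
  shows "([2, 1, 0, 0, 2], [2, 1, 0, 0, 2, 0, 2]) \<in> E"
proof -
  obtain k m where L: "L = [2, 1] @ replicate k 0 @ replicate m 2" and k: "2 \<le> k" and m: "1 \<le> m"
    using Lb unfolding btab_plus_def by blast
  have shL: "shaped L" using factor_shaped[of "[]" L "[]"] Lb by simp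
  have sL: "set L \<subseteq> {0, 1, 2}" using btab_set[OF Lb] .
  have A1: "set w \<subseteq> {0, 1, 2} \<and> lam (subst_word r1 L) (subst_word r1 w)"
    using ata_lam[OF contA LE sL r1_below belowA1[OF shL]] by blast
  have A2: "lam (subst_word r2 L) (subst_word r2 w)"
    using ata_lam[OF contA LE sL r2_below belowA2[OF shL]] by blast
  have sw: "set w \<subseteq> {0, 1, 2}" using A1 by blast
  have h1L: "subst_word r1 L = 1 # replicate k 0" using L by (simp add: r1_def)
  have h2L: "subst_word r2 L = 0 # 1 # replicate m 0" using L by (simp add: r2_def)
  define H1 where "H1 = subst_word r1 w"
  define H2 where "H2 = subst_word r2 w"
  have l1: "lam (1 # replicate k 0) H1" using A1 h1L H1_def by simp
  have l2: "lam (0 # 1 # replicate m 0) H2" using A2 h2L H2_def by simp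
  have hd1: "hd H1 = 1" using lam_hd[OF l1] by simp
  have ne1: "H1 \<noteq> []" using lam_set[OF l1] by auto
  have cnt1: "\<not> 2 \<le> count_list H1 1" using lam_count[OF l1, of 1] by (simp add: count_list_replicate)
  have cnt0: "2 \<le> count_list H1 0" using lam_count[OF l1, of 0] k by (simp add: count_list_replicate)
  have hd2: "hd H2 = 0" using lam_hd[OF l2] by simp
  have one2: "1 \<in> set H2" using lam_set[OF l2] by auto
  have c20: "2 \<le> count_list H2 0" using lam_count[OF l2, of 0] m by (simp add: count_list_replicate)
  have nft: "\<not> ft 0 H2" using lam_ft[OF l2, of 0] by simp
  have "w \<noteq> []" using ne1 H1_def by auto
  then obtain c w' where w: "w = c # w'" by (cases w) auto
  have cin: "c \<in> {0, 1, 2}" using sw w by auto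
  have c2: "c = 2"
  proof (rule ccontr)
    assume "c \<noteq> 2"
    then have "c = 0 \<or> c = 1" using cin by auto
    then show False
    proof
      assume "c = 0"
      then have "hd H1 = 0" using w H1_def by (simp add: r1_def)
      then show False using hd1 by simp
    next
      assume "c = 1"
      then have "hd H2 = 1" using w H2_def by (simp add: r2_def)
      then show False using hd2 by simp
    qed
  qed
  have H1w: "H1 = subst_word r1 w'" using w c2 H1_def by (simp add: r1_def)
  have H2w: "H2 = 0 # subst_word r2 w'" using w c2 H2_def by (simp add: r2_def)
  have ne2: "subst_word r2 w' \<noteq> []" using one2 H2w by auto
  have hdne: "hd (subst_word r2 w') \<noteq> 0" using nft H2w ne2 by auto
  have "w' \<noteq> []" using ne1 H1w by auto
  then obtain c' u where w': "w' = c' # u" by (cases w') auto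
  have cin': "c' \<in> {0, 1, 2}" using sw w w' by auto
  have c1: "c' = 1"
  proof (rule ccontr)
    assume "c' \<noteq> 1"
    then have "c' = 0 \<or> c' = 2" using cin' by auto
    then show False
    proof
      assume "c' = 0"
      then have "hd H1 = 0" using w' H1w by (simp add: r1_def)
      then show False using hd1 by simp
    next
      assume "c' = 2"
      then have "hd (subst_word r2 w') = 0" using w' by (simp add: r2_def)
      then show False using hdne by simp
    qed
  qed
  have wu: "w = 2 # 1 # u" using w w' c2 c1 by simp
  have su: "set u \<subseteq> {0, 1, 2}" using sw wu by auto
  have cr: "count_list (subst_word r1 u) 1 = count_list u 1"
    "count_list (subst_word r1 u) 0 = count_list u 0" "count_list (subst_word r2 u) 0 = count_list u 2"
    using cnt_r[OF su] by auto
  have H1u: "H1 = 1 # subst_word r1 u" using H1w w' c1 by (simp add: r1_def)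
  have H2u: "H2 = 0 # 1 # subst_word r2 u" using H2w w' c1 by (simp add: r2_def)
  have "count_list u 1 = 0" using cnt1 H1u cr by simp
  then have "1 \<notin> set u" by (simp add: count_list_0_iff)
  then have su2: "set u \<subseteq> {0, 2}" using su by auto
  have u0: "2 \<le> count_list u 0" using cnt0 H1u cr by simp
  have u2: "1 \<le> count_list u 2" using c20 H2u cr by simp
  have "\<not> sorted u"
  proof
    assume "sorted u"
    then obtain a b where ab: "u = replicate a 0 @ replicate b 2" using sort02 su2 by blast
    then have "2 \<le> a" "1 \<le> b" using u0 u2 by (simp_all add: count_list_replicate)
    then have "w \<in> btab_plus" using btab_mem wu ab by simp
    then show False using wb by simp
  qed
  then obtain p q where pq: "u = p @ [2, 0] @ q" using unsorted02[OF su2] by blast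
  have "([2, 1] @ replicate k 0 @ replicate m 2, 2 # 1 # u) \<in> E" using LE L wu by simp
  then show ?thesis using derivation k m su2 pq by blast
qed

lemma key:
  assumes contA: "variety_contains E (M_lam {ata_plus})"
    and uv: "(u, v) \<in> E"
    and car: "\<forall>a. \<phi> a \<in> carrier (M_lam {btab_plus})"
    and nn: "eval_word (M_lam {btab_plus}) \<phi> u \<noteq> None"
    and ne: "eval_word (M_lam {btab_plus}) \<phi> u \<noteq> eval_word (M_lam {btab_plus}) \<phi> v"
  shows "([2, 1, 0, 0, 2], [2, 1, 0, 0, 2, 0, 2]) \<in> E"
proof -
  define \<rho> where "\<rho> = (\<lambda>z. SOME r. \<phi> z = Some (lam_class r))"
  have hp: "\<phi> z = None \<or> \<phi> z = Some (lam_class (\<rho> z))" for z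
  proof (cases "\<phi> z = None")
    case False
    have "\<phi> z \<in> {None} \<union> Some ` {X. (\<exists>u. X = lam_class u) \<and> below_W {btab_plus} X}"
      using car unfolding carrier_M by blast
    then have "\<exists>r. \<phi> z = Some (lam_class r)" using False by auto
    then have "\<phi> z = Some (lam_class (\<rho> z))" unfolding \<rho>_def by (rule someI_ex)
    then show ?thesis by simp
  qed simp
  have hb: "below_W {btab_plus} (lam_class [])"
  proof -
    have "[2, 1, 0, 0, 2] @ [] @ [] \<in> btab_plus" using btab_mem[of 2 1] by (simp add: numeral_2_eq_2)
    then show ?thesis using below_char[OF B_class] by blast
  qed
  have ev: "eval_word (M_lam {btab_plus}) \<phi> w = (if (\<forall>z\<in>set w. \<phi> z \<noteq> None) \<and> below_W {btab_plus} (lam_class (subst_word \<rho> w))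
      then Some (lam_class (subst_word \<rho> w)) else None)" for w
    using eval_M[OF hb hp] .
  have U: "\<forall>z\<in>set u. \<phi> z \<noteq> None" and BU: "below_W {btab_plus} (lam_class (subst_word \<rho> u))"
    using nn ev[of u] by (auto split: if_splits)
  have evu: "eval_word (M_lam {btab_plus}) \<phi> u = Some (lam_class (subst_word \<rho> u))" using ev[of u] U BU by simp
  define \<sigma> where "\<sigma> = (\<lambda>z. if \<phi> z = None then [3] else \<rho> z)"
  define x where "x = subst_word \<rho> u"
  define y where "y = subst_word \<sigma> v"
  have xs: "x = subst_word \<sigma> u" unfolding x_def using U by (intro subst_cong) (auto simp: \<sigma>_def)
  have xy: "(x, y) \<in> E" using E_subst[OF eqt uv, of \<sigma>] xs y_def by simp
  obtain p s where ps: "p @ x @ s \<in> btab_plus" using BU below_char[OF B_class] x_def by blast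
  show ?thesis
  proof (cases "\<exists>p' s'. p' @ y @ s' \<in> btab_plus")
    case False
    have "(p @ x @ s, p @ y @ s) \<in> E" using E_ctx[OF eqt xy] .
    moreover have "p @ y @ s \<notin> btab_plus" using False by blast
    ultimately show ?thesis using dpart[OF contA _ ps] by blast
  next
    case True
    then obtain p' s' where ps': "p' @ y @ s' \<in> btab_plus" by blast
    have sy: "set y \<subseteq> {0, 1, 2}" using btab_set[OF ps'] by auto
    have V: "\<forall>z\<in>set v. \<phi> z \<noteq> None"
    proof
      fix z assume z: "z \<in> set v"
      show "\<phi> z \<noteq> None"
      proof
        assume "\<phi> z = None"
        then have "\<sigma> z = [3]" by (simp add: \<sigma>_def)
        moreover have "set (\<sigma> z) \<subseteq> set y" using z unfolding y_def subst_word_def by auto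
        ultimately show False using sy by auto
      qed
    qed
    have ys: "y = subst_word \<rho> v" unfolding y_def using V by (intro subst_cong) (auto simp: \<sigma>_def)
    have BV: "below_W {btab_plus} (lam_class y)" using below_char[OF B_class] ps' by blast
    have evv: "eval_word (M_lam {btab_plus}) \<phi> v = Some (lam_class y)" using ev[of v] V BV ys by simp
    have nl: "\<not> lam x y" using ne evu evv x_def lam_class_iff by auto
    have shx: "shaped x" using factor_shaped[OF ps] .
    have shy: "shaped y" using factor_shaped[OF ps'] .
    have sx: "set x \<subseteq> {0, 1, 2}" using btab_set[OF ps] by auto
    have l1: "lam (subst_word r1 x) (subst_word r1 y)"
      using ata_lam[OF contA xy sx r1_below belowA1[OF shx]] by blast
    have l2: "lam (subst_word r2 x) (subst_word r2 y)"
      using ata_lam[OF contA xy sx r2_below belowA2[OF shx]] by blast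
    have "lam x y" using lam_shaped[OF shx shy l1 l2] .
    then show ?thesis using nl by simp
  qed
qed

end

theorem lemma4p3:
  fixes E :: "(word \<times> word) set"
  assumes "equational_theory E"
    and "([0, 1, 0], [0, 1, 0, 0]) \<in> E"
    and "variety_contains E (M_lam {ata_plus})"
    and "\<not> variety_contains E (M_lam {btab_plus})"
  shows "([0, 1, 2, 2, 0], [0, 1, 2, 2, 0, 2, 0]) \<in> E"
proof -
  interpret xtx E using assms(1,2) by unfold_locales
  obtain e \<phi> where e: "e \<in> E" and car: "\<forall>a. \<phi> a \<in> carrier (M_lam {btab_plus})"
    and ne: "eval_word (M_lam {btab_plus}) \<phi> (fst e) \<noteq> eval_word (M_lam {btab_plus}) \<phi> (snd e)"
    using assms(4) unfolding variety_contains_def sat_id_def by blast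
  obtain u v where uv: "e = (u, v)" by (cases e)
  have X: "([2, 1, 0, 0, 2], [2, 1, 0, 0, 2, 0, 2]) \<in> E"
  proof (cases "eval_word (M_lam {btab_plus}) \<phi> u = None")
    case False
    then show ?thesis using key[OF assms(3) _ car False] e uv ne by simp
  next
    case True
    then have "eval_word (M_lam {btab_plus}) \<phi> v \<noteq> None" using ne uv by simp
    moreover have "(v, u) \<in> E" using E_sym[OF assms(1)] e uv by simp
    ultimately show ?thesis using key[OF assms(3) _ car] ne uv by fastforce
  qed
  define \<sigma> where "\<sigma> = (\<lambda>z::nat. if z = 0 then [2] else if z = 2 then [0] else [z])"
  have "(subst_word \<sigma> [2, 1, 0, 0, 2], subst_word \<sigma> [2, 1, 0, 0, 2, 0, 2]) \<in> E"
    using E_subst[OF assms(1) X] .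
  then show ?thesis by (simp add: \<sigma>_def)
qed

end
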